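(* Let $(X,d)$ be a compact metric space and let $\mathcal{F}=\{X; f_{\lambda}\mid\lambda\in\Lambda\}$ be an iterated function system in which every $f_\lambda:X\to X$ is continuous and surjective. If $\mathcal{F}$ has the average shadowing property, then every point $x\in X$ is a chain recurrent point of $\mathcal{F}$; moreover, $\mathcal{F}$ has only one chain component, namely the whole space, i.e. for every $x,y\in X$ and every $\epsilon>0$ there exists an $\epsilon$-chain of $\mathcal{F}$ from $x$ to $y$.
   Context: An iterated function system (IFS) $\mathcal{F}=\{X; f_{\lambda}\mid\lambda\in\Lambda\}$ on a metric space $(X,d)$ is a family of continuous maps $f_\lambda:X\to X$ indexed by a finite nonempty set $\Lambda$. For $\sigma=(\lambda_0,\lambda_1,\dots)\in\Lambda^{\mathbb{Z}_+}$ write $\mathcal{F}_{\sigma_n}=f_{\lambda_{n-1}}\circ\cdots\circ f_{\lambda_0}$ for $n\ge1$ and $\mathcal{F}_{\sigma_0}=\mathrm{id}_X$. For $\delta>0$, a sequence $(x_i)_{i\ge0}$ in $X$ is a $\delta$-average pseudo-orbit of $\mathcal{F}$ if there exist a natural number $N$ and $\sigma=(\lambda_0,\lambda_1,\dots)\in\Lambda^{\mathbb{Z}_+}$ such that for all $n\ge N$, $\frac1n\sum_{i=0}^{n-1}d(f_{\lambda_i}(x_i),x_{i+1})<\delta$. A sequence $(x_i)_{i\ge0}$ is $\epsilon$-shadowed in average by $z\in X$ if there exists $\sigma\in\Lambda^{\mathbb{Z}_+}$ with $\limsup_{n\to\infty}\frac1n\sum_{i=0}^{n-1}d(\mathcal{F}_{\sigma_i}(z),x_i)<\epsilon$.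 $\mathcal{F}$ has the average shadowing property if for every $\epsilon>0$ there is $\delta>0$ such that every $\delta$-average pseudo-orbit of $\mathcal{F}$ is $\epsilon$-shadowed in average by some point of $X$. For $\epsilon>0$ and $x,y\in X$, an $\epsilon$-chain of $\mathcal{F}$ from $x$ to $y$ is a finite sequence $p_0=x,p_1,\dots,p_n=y$ ($n\ge1$) of points of $X$ together with indices $\lambda_0,\dots,\lambda_{n-1}\in\Lambda$ such that $d(f_{\lambda_i}(p_i),p_{i+1})\le\epsilon$ for all $i$. A point $x$ is chain recurrent for $\mathcal{F}$ if for every $\epsilon>0$ there is an $\epsilon$-chain from $x$ to $x$. *)

theory Defs
  imports "HOL-Analysis.Analysis" "HOL-Library.Liminf_Limsup"
begin

fun ifs_comp :: "('l \<Rightarrow> 'a \<Rightarrow> 'a) \<Rightarrow> (nat \<Rightarrow> 'l) \<Rightarrow> nat \<Rightarrow> 'a \<Rightarrow> 'a" where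
  "ifs_comp f \<sigma> 0 = id"
| "ifs_comp f \<sigma> (Suc n) = f (\<sigma> n) \<circ> ifs_comp f \<sigma> n"

definition avg_pseudo_orbit ::
  "'a::metric_space set \<Rightarrow> 'l set \<Rightarrow> ('l \<Rightarrow> 'a \<Rightarrow> 'a) \<Rightarrow> real \<Rightarrow> (nat \<Rightarrow> 'a) \<Rightarrow> bool" where
  "avg_pseudo_orbit X L f \<delta> x \<longleftrightarrow> (\<forall>i. x i \<in> X) \<and>
     (\<exists>N::nat. \<exists>\<sigma>. (\<forall>i. \<sigma> i \<in> L) \<and>
        (\<forall>n\<ge>N. n \<ge> 1 \<longrightarrow> (\<Sum>i<n. dist (f (\<sigma> i) (x i)) (x (Suc i))) / real n < \<delta>))"

definition avg_shadowed ::
  "'a::metric_space set \<Rightarrow> 'l set \<Rightarrow> ('l \<Rightarrow> 'a \<Rightarrow> 'a) \<Rightarrow> real \<Rightarrow> (nat \<Rightarrow> 'a) \<Rightarrow> 'a \<Rightarrow> bool" where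
  "avg_shadowed X L f \<epsilon> x z \<longleftrightarrow> (\<exists>\<sigma>. (\<forall>i. \<sigma> i \<in> L) \<and>
     limsup (\<lambda>n. ereal ((\<Sum>i<n. dist (ifs_comp f \<sigma> i z) (x i)) / real n)) < ereal \<epsilon>)"

definition average_shadowing ::
  "'a::metric_space set \<Rightarrow> 'l set \<Rightarrow> ('l \<Rightarrow> 'a \<Rightarrow> 'a) \<Rightarrow> bool" where
  "average_shadowing X L f \<longleftrightarrow> (\<forall>\<epsilon>>0. \<exists>\<delta>>0. \<forall>x. avg_pseudo_orbit X L f \<delta> x \<longrightarrow>
      (\<exists>z\<in>X. avg_shadowed X L f \<epsilon> x z))"

definition ifs_chain ::
  "'a::metric_space set \<Rightarrow> 'l set \<Rightarrow> ('l \<Rightarrow> 'a \<Rightarrow> 'a) \<Rightarrow> real \<Rightarrow> 'a \<Rightarrow> 'a \<Rightarrow> bool" where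
  "ifs_chain X L f \<epsilon> x y \<longleftrightarrow> (\<exists>n\<ge>1. \<exists>p::nat \<Rightarrow> 'a. \<exists>idx::nat \<Rightarrow> 'l.
      p 0 = x \<and> p n = y \<and> (\<forall>i\<le>n. p i \<in> X) \<and>
      (\<forall>i<n. idx i \<in> L \<and> dist (f (idx i) (p i)) (p (Suc i)) \<le> \<epsilon>))"

definition chain_recurrent ::
  "'a::metric_space set \<Rightarrow> 'l set \<Rightarrow> ('l \<Rightarrow> 'a \<Rightarrow> 'a) \<Rightarrow> 'a \<Rightarrow> bool" where
  "chain_recurrent X L f x \<longleftrightarrow> (\<forall>\<epsilon>>0. ifs_chain X L f \<epsilon> x x)"

end

theory Submission
  imports Defs
begin

definition rch :: "'a::metric_space set \<Rightarrow> 'l set \<Rightarrow> ('l \<Rightarrow> 'a \<Rightarrow> 'a) \<Rightarrow> real \<Rightarrow> 'a \<Rightarrow> 'a \<Rightarrow> bool"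
  where "rch X L f e u v \<longleftrightarrow> u = v \<or> ifs_chain X L f e u v"

lemma chain_step:
  assumes "u \<in> X" "w \<in> X" "l \<in> L" "dist (f l u) w \<le> e"
  shows "ifs_chain X L f e u w"
  unfolding ifs_chain_def
  apply (rule exI[of _ 1])
  apply (rule conjI, simp)
  apply (rule exI[of _ "\<lambda>t. if t = 0 then u else w"])
  apply (rule exI[of _ "\<lambda>_. l"])
  using assms by (auto simp: le_Suc_eq)

lemma chain_trans:
  assumes "ifs_chain X L f e u v" "ifs_chain X L f e v w"
  shows "ifs_chain X L f e u w"
proof -
  obtain n1 p1 i1 where 1: "n1 \<ge> 1" "p1 0 = u" "p1 n1 = v" "\<forall>i\<le>n1. p1 i \<in> X"
    "\<forall>i<n1. i1 i \<in> L \<and> dist (f (i1 i) (p1 i)) (p1 (Suc i)) \<le> e"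
    using assms(1) unfolding ifs_chain_def by blast
  obtain n2 p2 i2 where 2: "n2 \<ge> 1" "p2 0 = v" "p2 n2 = w" "\<forall>i\<le>n2. p2 i \<in> X"
    "\<forall>i<n2. i2 i \<in> L \<and> dist (f (i2 i) (p2 i)) (p2 (Suc i)) \<le> e"
    using assms(2) unfolding ifs_chain_def by blast
  define p where "p t = (if t \<le> n1 then p1 t else p2 (t - n1))" for t
  define idx where "idx t = (if t < n1 then i1 t else i2 (t - n1))" for t
  have a: "p 0 = u" "p (n1+n2) = w" using 1 2 by (auto simp: p_def)
  have b: "\<forall>i\<le>n1+n2. p i \<in> X"
  proof (intro allI impI)
    fix i assume "i \<le> n1+n2"
    then show "p i \<in> X" using 1 2 by (cases "i \<le> n1") (auto simp: p_def)
  qed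
  have c: "\<forall>i<n1+n2. idx i \<in> L \<and> dist (f (idx i) (p i)) (p (Suc i)) \<le> e"
  proof (intro allI impI)
    fix i assume i: "i < n1+n2"
    consider "Suc i \<le> n1" | "i = n1" | "i > n1" by linarith
    then show "idx i \<in> L \<and> dist (f (idx i) (p i)) (p (Suc i)) \<le> e"
    proof cases
      case 1
      then show ?thesis using \<open>\<forall>i<n1. _\<close> by (auto simp: p_def idx_def)
    next
      case 3
      then have "Suc i - n1 = Suc (i - n1)" "i - n1 < n2" using i by auto
      then show ?thesis using 3 2(5) by (auto simp: p_def idx_def)
    next
      case c: 2
      then show ?thesis using 1 2 by (auto simp: p_def idx_def)
    qed
  qed
  show ?thesis unfolding ifs_chain_def
    apply (rule exI[of _ "n1+n2"]) using 1 a b c by auto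
qed

lemma orbit_rch:
  assumes "\<forall>t\<le>K. q t \<in> X" "\<forall>t<K. \<tau> t \<in> L \<and> f (\<tau> t) (q t) = q (Suc t)" "e \<ge> 0"
  shows "rch X L f e (q 0) (q K)"
proof (cases "K = 0")
  case True then show ?thesis by (simp add: rch_def)
next
  case False
  then show ?thesis unfolding rch_def ifs_chain_def
    apply -
    apply (rule disjI2)
    apply (rule exI[of _ K])
    apply (rule conjI) using False apply simp
    apply (rule exI[of _ q], rule exI[of _ \<tau>]) using assms by auto
qed

lemma rch_step:
  assumes "rch X L f e u v" "v \<in> X" "w \<in> X" "l \<in> L" "dist (f l v) w \<le> e"
  shows "ifs_chain X L f e u w"
  using assms chain_step[of v X w l L f e] chain_trans unfolding rch_def by blast

lemma chain_rch:
  assumes "ifs_chain X L f e u v" "rch X L f e v w"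
  shows "ifs_chain X L f e u w"
  using assms chain_trans unfolding rch_def by blast

lemma sum_shift_block:
  fixes d :: "nat \<Rightarrow> real"
  shows "(\<Sum>c<m. d (a + c)) = (\<Sum>i\<in>{a..<a+m}. d i)"
  by (induction m) (auto simp: add.commute)

lemma sum_blocks:
  fixes d :: "nat \<Rightarrow> real"
  assumes "\<forall>i. d i \<ge> 0" "sh \<le> m"
  shows "(\<Sum>k<K. \<Sum>c<m. d (2*m*k + sh + c)) \<le> (\<Sum>i<2*m*K. d i)"
proof (induction K)
  case 0 show ?case by simp
next
  case (Suc K)
  have e1: "(\<Sum>i<2*m*Suc K. d i) = (\<Sum>i<2*m*K. d i) + (\<Sum>i\<in>{2*m*K..<2*m*K+2*m}. d i)"
  proof -
    have "(\<Sum>i<2*m*Suc K. d i) = (\<Sum>i\<in>{0..<2*m*Suc K}. d i)" by (simp add: lessThan_atLeast0)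
    also have "\<dots> = (\<Sum>i\<in>{0..<2*m*K}. d i) + (\<Sum>i\<in>{2*m*K..<2*m*Suc K}. d i)"
      by (rule sum.atLeastLessThan_concat[symmetric]) auto
    finally show ?thesis by (simp add: lessThan_atLeast0 add.commute)
  qed
  have e2: "(\<Sum>c<m. d (2*m*K + sh + c)) = (\<Sum>i\<in>{2*m*K+sh..<2*m*K+sh+m}. d i)"
    by (rule sum_shift_block)
  have e3: "(\<Sum>i\<in>{2*m*K+sh..<2*m*K+sh+m}. d i) \<le> (\<Sum>i\<in>{2*m*K..<2*m*K+2*m}. d i)"
    by (rule sum_mono2) (use assms in auto)
  show ?case using Suc e1 e2 e3 by simp
qed

theorem mainTheorem6:
  fixes X :: "'a::metric_space set" and L :: "'l set" and f :: "'l \<Rightarrow> 'a \<Rightarrow> 'a"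
  assumes "compact X"
    and "finite L" and "L \<noteq> {}"
    and "\<And>l. l \<in> L \<Longrightarrow> continuous_on X (f l)"
    and "\<And>l. l \<in> L \<Longrightarrow> f l ` X = X"
    and "average_shadowing X L f"
  shows "(\<forall>x\<in>X. chain_recurrent X L f x) \<and>
         (\<forall>x\<in>X. \<forall>y\<in>X. \<forall>\<epsilon>>0. ifs_chain X L f \<epsilon> x y)"
proof -
  have main: "\<forall>x\<in>X. \<forall>y\<in>X. \<forall>\<epsilon>>0. ifs_chain X L f \<epsilon> x y"
  proof (intro ballI allI impI)
    fix x y and \<epsilon> :: real assume x: "x \<in> X" and y: "y \<in> X" and \<epsilon>: "\<epsilon> > 0"
    obtain l0 where l0: "l0 \<in> L" using assms(3) by blast
    have fX: "\<And>l u. l \<in> L \<Longrightarrow> u \<in> X \<Longrightarrow> f l u \<in> X" using assms(5) by blast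
    have gx: "\<forall>v\<in>X. \<exists>u. u \<in> X \<and> f l0 u = v"
    proof
      fix v assume "v \<in> X"
      then have "v \<in> f l0 ` X" using assms(5)[OF l0] by simp
      then show "\<exists>u. u \<in> X \<and> f l0 u = v" by blast
    qed
    obtain g where g: "\<forall>v\<in>X. g v \<in> X \<and> f l0 (g v) = v" using bchoice[OF gx] by blast
    define b where "b k = (g^^k) y" for k
    have bX: "b k \<in> X" for k by (induction k) (auto simp: b_def g y)
    have bstep: "f l0 (b (Suc k)) = b k" for k using bX g by (simp add: b_def)
    obtain D where D: "\<forall>u\<in>X. \<forall>v\<in>X. dist u v \<le> D"
    proof -
      obtain c r where "\<forall>v\<in>X. dist c v \<le> r"
        using compact_imp_bounded[OF assms(1)] unfolding bounded_def by blast
      then have "\<forall>u\<in>X. \<forall>v\<in>X. dist u v \<le> 2*r"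
      proof (intro ballI)
        fix u v assume a: "\<forall>v\<in>X. dist c v \<le> r" "u \<in> X" "v \<in> X"
        have "dist u v \<le> dist c u + dist c v" by (rule dist_triangle3)
        moreover have "dist c u \<le> r" "dist c v \<le> r" using a by auto
        ultimately show "dist u v \<le> 2*r" by linarith
      qed
      then show ?thesis using that by blast
    qed
    have "dist x x \<le> D" using D x by blast
    then have D0: "D \<ge> 0" by simp
    obtain \<delta> where \<delta>: "\<delta> > 0" "\<forall>s. avg_pseudo_orbit X L f \<delta> s \<longrightarrow> (\<exists>z\<in>X. avg_shadowed X L f (\<epsilon>/4) s z)"
      using assms(6) \<epsilon> unfolding average_shadowing_def by (meson divide_pos_pos zero_less_numeral)
    obtain m0 :: nat where m0: "D/\<delta> < m0" using reals_Archimedean2 by blast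
    define m where "m = max 1 m0"
    have m: "m \<ge> 1" "D/\<delta> < m" using m0 by (auto simp: m_def)
    define F where "F t = (f l0 ^^ t) x" for t
    have FX: "F t \<in> X" for t by (induction t) (auto simp: F_def x fX l0)
    have Fstep: "f l0 (F t) = F (Suc t)" for t by (simp add: F_def)
    define s where "s i = (if even (i div m) then F (i mod m + 1) else b (m - 1 - i mod m))" for i
    have sX: "s i \<in> X" for i using FX bX by (simp add: s_def)
    have err: "dist (f l0 (s i)) (s (Suc i)) \<le> (if Suc i mod m = 0 then D else 0)" for i
    proof (cases "Suc i mod m = 0")
      case True then show ?thesis using D fX[OF l0 sX] sX by simp
    next
      case False
      then have h1: "Suc i div m = i div m" by (simp add: div_Suc)
      have ne: "Suc (i mod m) \<noteq> m" using False by (simp add: mod_Suc split: if_splits)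
      have "i mod m < m" using m by simp
      then have h2: "Suc i mod m = Suc (i mod m)" "Suc (i mod m) < m"
        using ne by (simp_all add: mod_Suc)
      show ?thesis
      proof (cases "even (i div m)")
        case True then show ?thesis using h1 h2 by (simp add: s_def Fstep)
      next
        case odd: False
        have "m - 1 - i mod m = Suc (m - 1 - Suc (i mod m))" using h2 by auto
        then show ?thesis using odd h1 h2 bstep by (simp add: s_def)
      qed
    qed
    have sumerr: "(\<Sum>i<n. dist (f l0 (s i)) (s (Suc i))) \<le> D * real (n div m)" for n
    proof (induction n)
      case 0 then show ?case by simp
    next
      case (Suc n)
      have "(\<Sum>i<Suc n. dist (f l0 (s i)) (s (Suc i))) \<le> D * real (n div m) + (if Suc n mod m = 0 then D else 0)"
        using Suc err[of n] by simp
      also have "\<dots> = D * real (Suc n div m)" by (simp add: div_Suc algebra_simps)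
      finally show ?case .
    qed
    have apo: "avg_pseudo_orbit X L f \<delta> s"
      unfolding avg_pseudo_orbit_def
    proof (intro conjI allI exI[of _ 0] exI[of _ "\<lambda>_. l0"] impI)
      fix n :: nat assume n: "1 \<le> n"
      have dm: "real (n div m) * real m \<le> real n"
      proof -
        have "n div m * m \<le> n" by simp
        then show ?thesis by (metis of_nat_le_iff of_nat_mult)
      qed
      have "(\<Sum>i<n. dist (f l0 (s i)) (s (Suc i))) / real n \<le> D * real (n div m) / real n"
        using sumerr n by (simp add: divide_right_mono)
      also have "\<dots> \<le> D / real m"
      proof -
        have "D * real (n div m) * real m \<le> D * real n"
          using mult_left_mono[OF dm D0] by (simp add: mult.assoc)
        then show ?thesis using m n by (simp add: divide_le_eq le_divide_eq mult.commute mult.left_commute)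
      qed
      also have "\<dots> < \<delta>"
      proof -
        have "D < real m * \<delta>" using m(2) \<delta>(1) by (simp only: pos_divide_less_eq)
        moreover have "real m > 0" using m by simp
        ultimately show ?thesis by (simp only: pos_divide_less_eq mult.commute)
      qed
      finally show "(\<Sum>i<n. dist (f l0 (s i)) (s (Suc i))) / real n < \<delta>" .
    qed (use sX l0 in auto)
    obtain z where z: "z \<in> X" "avg_shadowed X L f (\<epsilon>/4) s z" using \<delta> apo by blast
    obtain \<sigma> where \<sigma>: "\<forall>i. \<sigma> i \<in> L"
      and ls: "limsup (\<lambda>n. ereal ((\<Sum>i<n. dist (ifs_comp f \<sigma> i z) (s i)) / real n)) < ereal (\<epsilon>/4)"
      using z(2) unfolding avg_shadowed_def by blast
    define zo where "zo i = ifs_comp f \<sigma> i z" for i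
    have zoX: "zo i \<in> X" for i by (induction i) (auto simp: zo_def z fX \<sigma>)
    have zostep: "f (\<sigma> t) (zo t) = zo (Suc t)" for t by (simp add: zo_def)
    define d where "d i = dist (zo i) (s i)" for i
    have d0: "\<forall>i. d i \<ge> 0" by (simp add: d_def)
    have "eventually (\<lambda>n. ereal ((\<Sum>i<n. d i) / real n) < ereal (\<epsilon>/4)) sequentially"
      using Limsup_lessD[OF ls] unfolding d_def zo_def by simp
    then obtain N0 where N0: "\<And>n. n \<ge> N0 \<Longrightarrow> (\<Sum>i<n. d i) / real n < \<epsilon>/4"
      unfolding eventually_sequentially by auto
    have divq: "(q*m + c) div m = q" "(q*m+c) mod m = c" if "c < m" for q c
      using that m by auto
    have "\<exists>i j. i < j \<and> even (i div m) \<and> odd (j div m) \<and> d i \<le> \<epsilon> \<and> d j \<le> \<epsilon>"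
    proof (rule ccontr)
      assume H: "\<not> ?thesis"
      have "\<exists>N sh. sh \<le> m \<and> (\<forall>k\<ge>N. \<forall>c<m. d (2*m*k + sh + c) \<ge> \<epsilon>)"
      proof (cases "\<exists>i0. even (i0 div m) \<and> d i0 \<le> \<epsilon>")
        case True
        then obtain i0 where i0: "even (i0 div m)" "d i0 \<le> \<epsilon>" by blast
        have "\<forall>k\<ge>Suc i0. \<forall>c<m. d (2*m*k + m + c) \<ge> \<epsilon>"
        proof (intro allI impI)
          fix k c assume k: "Suc i0 \<le> k" and c: "c < m"
          have e: "2*m*k + m + c = (2*k+1)*m + c" by (simp add: algebra_simps)
          have "odd ((2*m*k + m + c) div m)" unfolding e divq(1)[OF c] by simp
          moreover have "i0 < 2*m*k + m + c"
          proof -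
            have "k \<le> m*k" using m by simp
            then show ?thesis using k by linarith
          qed
          ultimately have "\<not> d (2*m*k + m + c) \<le> \<epsilon>" using H i0 by blast
          then show "d (2*m*k + m + c) \<ge> \<epsilon>" by linarith
        qed
        then show ?thesis by blast
      next
        case False
        have "\<forall>k\<ge>0. \<forall>c<m. d (2*m*k + 0 + c) \<ge> \<epsilon>"
        proof (intro allI impI)
          fix k c assume c: "c < m"
          have e: "2*m*k + 0 + c = (2*k)*m + c" by (simp add: algebra_simps)
          have "even ((2*m*k + 0 + c) div m)" unfolding e divq(1)[OF c] by simp
          then have "\<not> d (2*m*k + 0 + c) \<le> \<epsilon>" using False by blast
          then show "d (2*m*k + 0 + c) \<ge> \<epsilon>" by linarith
        qed
        then show ?thesis by blast
      qed
      then obtain N sh where sh: "sh \<le> m" and Nb: "\<forall>k\<ge>N. \<forall>c<m. d (2*m*k + sh + c) \<ge> \<epsilon>" by blast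
      define K where "K = max N N0 + 1"
      define g where "g k = (\<Sum>c<m. d (2*m*k + sh + c))" for k
      have g0: "g k \<ge> 0" for k unfolding g_def using d0 by (simp add: sum_nonneg)
      have gK: "g k \<ge> real m * \<epsilon>" if "k \<ge> K" for k
      proof -
        have "(\<Sum>c<m. \<epsilon>) \<le> g k" unfolding g_def
          by (rule sum_mono) (use Nb that K_def in auto)
        then show ?thesis by simp
      qed
      have "real K * (real m * \<epsilon>) = (\<Sum>k\<in>{K..<2*K}. real m * \<epsilon>)" by simp
      also have "\<dots> \<le> (\<Sum>k\<in>{K..<2*K}. g k)" by (rule sum_mono) (use gK in auto)
      also have "\<dots> \<le> (\<Sum>k<2*K. g k)" by (rule sum_mono2) (use g0 in auto)
      also have "\<dots> \<le> (\<Sum>i<2*m*(2*K). d i)" unfolding g_def by (rule sum_blocks[OF d0 sh])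
      finally have lo: "real K * (real m * \<epsilon>) \<le> (\<Sum>i<2*m*(2*K). d i)" .
      have nN: "2*m*(2*K) \<ge> N0"
      proof -
        have "K \<le> m*K" using m by simp
        moreover have "N0 \<le> K" unfolding K_def by simp
        ultimately show ?thesis by linarith
      qed
      have posn: "2*m*(2*K) > 0" using m by (simp add: K_def)
      then have pos: "real (2*m*(2*K)) > 0" by (simp only: of_nat_0_less_iff)
      have "(\<Sum>i<2*m*(2*K). d i) / real (2*m*(2*K)) < \<epsilon>/4" using N0[OF nN] .
      then have lt: "(\<Sum>i<2*m*(2*K). d i) < \<epsilon>/4 * real (2*m*(2*K))"
        using pos by (simp only: pos_divide_less_eq)
      have "\<epsilon>/4 * real (2*m*(2*K)) = real K * (real m * \<epsilon>)" by simp
      then show False using lt lo by linarith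
    qed
    then obtain i j where ij: "i < j" "even (i div m)" "odd (j div m)" "d i \<le> \<epsilon>" "d j \<le> \<epsilon>" by blast
    define a where "a = i mod m"
    define c where "c = j mod m"
    have si: "s i = F (a + 1)" using ij by (simp add: s_def a_def)
    have sj: "s j = b (m - 1 - c)" using ij by (simp add: s_def c_def)
    have c_lt: "c < m" using m by (simp add: c_def)
    have r1: "rch X L f \<epsilon> x (F a)"
      using orbit_rch[of a F X "\<lambda>_. l0" L f \<epsilon>] FX l0 Fstep \<epsilon> by (simp add: F_def)
    have c1: "ifs_chain X L f \<epsilon> x (zo i)"
      by (rule rch_step[OF r1 FX zoX l0]) (use ij si in \<open>simp add: Fstep d_def dist_commute\<close>)
    have r2: "rch X L f \<epsilon> (zo i) (zo (j - 1))"
      using orbit_rch[of "j - 1 - i" "\<lambda>t. zo (i + t)" X "\<lambda>t. \<sigma> (i + t)" L f \<epsilon>] zoX \<sigma> zostep \<epsilon> ij(1)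
      by simp
    have c2: "ifs_chain X L f \<epsilon> x (zo (j - 1))" by (rule chain_rch[OF c1 r2])
    have c3: "ifs_chain X L f \<epsilon> x (s j)"
    proof (rule rch_step[OF _ zoX sX \<sigma>[rule_format]])
      show "rch X L f \<epsilon> x (zo (j - 1))" using c2 by (simp add: rch_def)
      have "Suc (j - 1) = j" using ij by simp
      then show "dist (f (\<sigma> (j - 1)) (zo (j - 1))) (s j) \<le> \<epsilon>"
        using ij zostep[of "j - 1"] by (simp add: d_def)
    qed
    have r3: "rch X L f \<epsilon> (s j) y"
    proof -
      have st: "f l0 (b (m - 1 - c - t)) = b (m - 1 - c - Suc t)" if "t < m - 1 - c" for t
      proof -
        have "m - 1 - c - t = Suc (m - 1 - c - Suc t)" using that by auto
        then show ?thesis using bstep[of "m - 1 - c - Suc t"] by simp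
      qed
      have "rch X L f \<epsilon> (b (m - 1 - c - 0)) (b (m - 1 - c - (m - 1 - c)))"
        by (rule orbit_rch[of _ "\<lambda>t. b (m - 1 - c - t)" X "\<lambda>_. l0" L f \<epsilon>])
           (use bX l0 st \<epsilon> in auto)
      then show ?thesis using sj by (simp add: b_def)
    qed
    show "ifs_chain X L f \<epsilon> x y" by (rule chain_rch[OF c3 r3])
  qed
  then show ?thesis unfolding chain_recurrent_def by blast
qed

end
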